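(* Suppose $P$ is a convex, non-degenerate Euclidean polygon in $\mathbb{R}^2$ which is symmetric under rotation by $\pi$ about the origin. Then there exist $A\in SL(2,\mathbb{R})$ and $r>0$ such that $B^1(r)\subseteq A\cdot P\subseteq B^\infty(r)$.
   Context: $B^1(r)$ and $B^\infty(r)$ denote the closed balls of radius $r$ about the origin in $\mathbb{R}^2$ with respect to the $\ell^1$ and $\ell^\infty$ norms respectively. Non-degenerate means $P$ has nonempty interior (is not contained in a line). *)

theory Defs
  imports "HOL-Analysis.Analysis"
begin

definition convex_polygon :: "(real^2) set \<Rightarrow> bool" where
  "convex_polygon P \<longleftrightarrow> (\<exists>V. finite V \<and> P = convex hull V)"

definition ball1 :: "real \<Rightarrow> (real^2) set" where
  "ball1 r = {x. \<bar>x $ 1\<bar> + \<bar>x $ 2\<bar> \<le> r}"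

definition ballinf :: "real \<Rightarrow> (real^2) set" where
  "ballinf r = {x. max \<bar>x $ 1\<bar> \<bar>x $ 2\<bar> \<le> r}"

end

theory Submission
  imports Defs
begin

definition det2 :: "real^2 \<Rightarrow> real^2 \<Rightarrow> real" where
  "det2 x y = x$1 * y$2 - x$2 * y$1"

lemma star0:
  fixes P :: "(real^2) set"
  assumes "convex P" "0 \<in> P" "z \<in> P" "0 \<le> t" "t \<le> 1"
  shows "t *\<^sub>R z \<in> P"
proof -
  have "t *\<^sub>R z + (1 - t) *\<^sub>R 0 \<in> P"
    using assms convexD[of P z 0 t "1-t"] by simp
  then show ?thesis by simp
qed

theorem lemma6p5:
  fixes P :: "(real^2) set"
  assumes "convex_polygon P"
    and "interior P \<noteq> {}"
    and "\<And>x. x \<in> P \<Longrightarrow> - x \<in> P"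
  shows "\<exists>(A :: real^2^2) r. det A = 1 \<and> r > 0 \<and>
           ball1 r \<subseteq> (\<lambda>x. A *v x) ` P \<and> (\<lambda>x. A *v x) ` P \<subseteq> ballinf r"
proof -
  obtain V where V: "finite V" "P = convex hull V" using assms(1) unfolding convex_polygon_def by blast
  have cvx: "convex P" using V by simp
  have cpt: "compact P" using V by (simp add: compact_convex_hull finite_imp_compact)
  obtain c where c: "c \<in> interior P" using assms(2) by blast
  then obtain e where e: "e > 0" "ball c e \<subseteq> P" using open_contains_ball_eq open_interior interior_subset
    by (metis subset_trans)
  define d1 :: "real^2" where "d1 = vector [e/2, 0]"
  define d2 :: "real^2" where "d2 = vector [0, e/2]"
  have "norm d1 < e" "norm d2 < e"
    unfolding d1_def d2_def norm_vec_def L2_set_def sum_2 using e(1) by auto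
  then have inP: "c \<in> P" "c + d1 \<in> P" "c + d2 \<in> P" using e
    by (auto simp: dist_norm subset_iff)
  have ex: "\<exists>x\<in>P. \<exists>y\<in>P. det2 x y \<noteq> 0"
  proof (rule ccontr)
    assume "\<not> ?thesis"
    then have "det2 (c+d1) (c+d2) = 0" "det2 (c+d1) c = 0" "det2 c (c+d2) = 0"
      using inP by auto
    then show False using e(1) unfolding det2_def d1_def d2_def by (auto simp: algebra_simps)
  qed
  have ne: "P \<times> P \<noteq> {}" using inP by blast
  have cont: "continuous_on (P \<times> P) (\<lambda>z. det2 (fst z) (snd z))"
    unfolding det2_def by (intro continuous_intros)
  obtain w where w: "w \<in> P \<times> P" "\<forall>z\<in>P \<times> P. det2 (fst z) (snd z) \<le> det2 (fst w) (snd w)"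
    using continuous_attains_sup[OF compact_Times[OF cpt cpt] ne cont] by blast
  define u where "u = fst w"
  define v where "v = snd w"
  define M where "M = det2 u v"
  have uP: "u \<in> P" and vP: "v \<in> P" using w(1) unfolding u_def v_def by auto
  have max: "\<And>x y. x \<in> P \<Longrightarrow> y \<in> P \<Longrightarrow> det2 x y \<le> M"
    using w(2) unfolding M_def u_def v_def by force
  have Mpos: "M > 0"
  proof -
    obtain x y where xy: "x \<in> P" "y \<in> P" "det2 x y \<noteq> 0" using ex by blast
    have "det2 y x = - det2 x y" unfolding det2_def by simp
    then show ?thesis using max[OF xy(1,2)] max[OF xy(2,1)] xy(3) by linarith
  qed
  define r where "r = sqrt M"
  have rpos: "r > 0" using Mpos r_def by simp
  have rr: "r * r = M" using Mpos r_def by simp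
  define A :: "real^2^2" where
    "A = vector [vector [v$2 / r, - v$1 / r], vector [- u$2 / r, u$1 / r]]"
  have Av: "\<And>x. A *v x = vector [det2 x v / r, det2 u x / r]"
    unfolding A_def det2_def
    by (simp add: vec_eq_iff forall_2 matrix_vector_mult_def sum_2 diff_divide_distrib mult.commute)
  have detA: "det A = 1"
    unfolding A_def det_2 using rr Mpos rpos
    by (simp add: field_simps M_def det2_def) 
  have zP: "0 \<in> P"
  proof -
    have "(1/2) *\<^sub>R u + (1/2) *\<^sub>R (-u) \<in> P"
      using convexD[OF cvx uP assms(3)[OF uP], of "1/2" "1/2"] by simp
    then show ?thesis by simp
  qed
  have sub2: "(\<lambda>x. A *v x) ` P \<subseteq> ballinf r"
  proof
    fix y assume "y \<in> (\<lambda>x. A *v x) ` P"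
    then obtain x where x: "x \<in> P" "y = A *v x" by blast
    have nx: "- x \<in> P" using assms(3) x(1) by blast
    have "det2 x v \<le> M" "det2 (-x) v \<le> M" "det2 u x \<le> M" "det2 u (-x) \<le> M"
      using max x(1) nx uP vP by auto
    then have "\<bar>det2 x v\<bar> \<le> M" "\<bar>det2 u x\<bar> \<le> M" unfolding det2_def by auto
    then have "\<bar>det2 x v / r\<bar> \<le> r" "\<bar>det2 u x / r\<bar> \<le> r"
      using rpos rr by (auto simp: abs_divide divide_le_eq)
    then show "y \<in> ballinf r" unfolding ballinf_def x(2) Av using rpos by (simp add: abs_divide)
  qed
  have sub1: "ball1 r \<subseteq> (\<lambda>x. A *v x) ` P"
  proof
    fix y assume y: "y \<in> ball1 r"
    define a where "a = y$1 / r"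
    define b where "b = y$2 / r"
    have ab: "\<bar>a\<bar> + \<bar>b\<bar> \<le> 1" using y rpos unfolding ball1_def a_def b_def
      by (simp add: abs_divide add_divide_distrib[symmetric] divide_le_eq)
    define p where "p = (if a \<ge> 0 then u else -u)"
    define q where "q = (if b \<ge> 0 then v else -v)"
    have pP: "p \<in> P" unfolding p_def using uP assms(3) by auto
    have qP: "q \<in> P" unfolding q_def using vP assms(3) by auto
    have ap: "a *\<^sub>R u = \<bar>a\<bar> *\<^sub>R p" unfolding p_def by auto
    have bq: "b *\<^sub>R v = \<bar>b\<bar> *\<^sub>R q" unfolding q_def by auto
    define x where "x = a *\<^sub>R u + b *\<^sub>R v"
    have xP: "x \<in> P"
    proof (cases "\<bar>a\<bar> + \<bar>b\<bar> = 0")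
      case True then have "a = 0" "b = 0" by auto then show ?thesis using zP unfolding x_def by simp
    next
      case False
      define s where "s = \<bar>a\<bar> + \<bar>b\<bar>"
      have s: "s > 0" using False s_def by auto
      have "(\<bar>a\<bar>/s) *\<^sub>R p + (\<bar>b\<bar>/s) *\<^sub>R q \<in> P"
        using convexD[OF cvx pP qP, of "\<bar>a\<bar>/s" "\<bar>b\<bar>/s"] s s_def
        by (simp add: add_divide_distrib[symmetric])
      then have "s *\<^sub>R ((\<bar>a\<bar>/s) *\<^sub>R p + (\<bar>b\<bar>/s) *\<^sub>R q) \<in> P"
        using star0[OF cvx zP] s ab s_def by simp
      then show ?thesis using s unfolding x_def ap bq by (simp add: scaleR_add_right)
    qed
    have d1: "det2 x v = a * M" unfolding x_def det2_def M_def by (simp add: algebra_simps)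
    have d2: "det2 u x = b * M" unfolding x_def det2_def M_def by (simp add: algebra_simps)
    have "A *v x = y"
      unfolding Av d1 d2 using rpos rr
      by (simp add: vec_eq_iff forall_2 a_def b_def flip: rr)
    then show "y \<in> (\<lambda>x. A *v x) ` P" using xP by blast
  qed
  show ?thesis using detA rpos sub1 sub2 by blast
qed

end
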